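(* Let $k\geq 3$ and let $G$ be a $k$-uniform hypergraph. Then there is a picture $(P_0,\psi_0)$ over $G$ together with a family $(L_e)_{e\in E(G)}$ of mutually disjoint combinatorial lines such that $P_0=\bigcup_{e\in E(G)}L_e$ and $\psi_0[L_e]=e$ for every $e\in E(G)$.
   Context: A combinatorial line in $[k]^m$ is a set $\{\eta(i)\colon i\in[k]\}$ where, for some partition $[m]=C\cup M$ with $M\neq\emptyset$ and values $u_c\in[k]$ ($c\in C$), $\eta(i)$ has $c$-th coordinate $u_c$ for $c\in C$ and coordinate $i$ on every coordinate in $M$. A quasiline in $[k]^m$ is a $k$-element subset $L$ such that in every coordinate the entries of the points of $L$ are either all identical or mutually distinct. A picture over a $k$-uniform hypergraph $G$ ($k\geq3$) is a pair $(P,\psi)$ consisting of a subset $P\subseteq[k]^m$ of some Hales–Jewett cube and a map $\psi\colon P\to V(G)$ such that every quasiline $L\subseteq P$ is a combinatorial line and satisfies $\psi[L]\in E(G)$. *)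

theory Defs
  imports Main
begin

definition hj_cube :: "nat \<Rightarrow> nat \<Rightarrow> nat list set" where
  "hj_cube k m = {xs. length xs = m \<and> set xs \<subseteq> {1..k}}"

definition comb_line :: "nat \<Rightarrow> nat \<Rightarrow> nat list set \<Rightarrow> bool" where
  "comb_line k m L \<longleftrightarrow>
     (\<exists>M u. M \<subseteq> {..<m} \<and> M \<noteq> {} \<and> (\<forall>c<m. c \<notin> M \<longrightarrow> u c \<in> {1..k}) \<and>
        L = (\<lambda>i. map (\<lambda>c. if c \<in> M then i else u c) [0..<m]) ` {1..k})"

definition quasiline :: "nat \<Rightarrow> nat \<Rightarrow> nat list set \<Rightarrow> bool" where
  "quasiline k m L \<longleftrightarrow>
     L \<subseteq> hj_cube k m \<and> card L = k \<and>
     (\<forall>c<m. (\<forall>x\<in>L. \<forall>y\<in>L. x ! c = y ! c) \<or> inj_on (\<lambda>x. x ! c) L)"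

definition k_uniform_hypergraph :: "nat \<Rightarrow> 'v set \<Rightarrow> 'v set set \<Rightarrow> bool" where
  "k_uniform_hypergraph k V E \<longleftrightarrow> finite V \<and> (\<forall>e\<in>E. e \<subseteq> V \<and> card e = k)"

definition picture :: "nat \<Rightarrow> 'v set \<Rightarrow> 'v set set \<Rightarrow> nat \<Rightarrow> nat list set \<Rightarrow> (nat list \<Rightarrow> 'v) \<Rightarrow> bool" where
  "picture k V E m P \<psi> \<longleftrightarrow>
     P \<subseteq> hj_cube k m \<and> \<psi> ` P \<subseteq> V \<and>
     (\<forall>L. L \<subseteq> P \<and> quasiline k m L \<longrightarrow> comb_line k m L \<and> \<psi> ` L \<in> E)"

end

theory Submission
  imports Defs
begin

theorem lemma4p3:
  fixes k :: nat and V :: "'v set" and E :: "'v set set"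
  assumes "k \<ge> 3" and "k_uniform_hypergraph k V E"
  shows "\<exists>m P (\<psi> :: nat list \<Rightarrow> 'v) (Lf :: 'v set \<Rightarrow> nat list set).
           picture k V E m P \<psi> \<and>
           (\<forall>e\<in>E. comb_line k m (Lf e)) \<and>
           (\<forall>e\<in>E. \<forall>e'\<in>E. e \<noteq> e' \<longrightarrow> Lf e \<inter> Lf e' = {}) \<and>
           P = (\<Union>e\<in>E. Lf e) \<and>
           (\<forall>e\<in>E. \<psi> ` Lf e = e)"
proof -
  have finV: "finite V" and Esub: "\<And>e. e \<in> E \<Longrightarrow> e \<subseteq> V \<and> card e = k"
    using assms(2) unfolding k_uniform_hypergraph_def by auto
  have finE: "finite E" using Esub finV
    by (meson PowI finite_Pow_iff rev_finite_subset subsetI)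
  obtain idx where idx: "bij_betw idx E {0..<card E}"
    using ex_bij_betw_finite_nat[OF finE] by blast
  have idxinj: "\<And>e e'. e \<in> E \<Longrightarrow> e' \<in> E \<Longrightarrow> idx e = idx e' \<Longrightarrow> e = e'"
    using idx unfolding bij_betw_def inj_on_def by blast
  have idxlt: "\<And>e. e \<in> E \<Longrightarrow> idx e < card E"
    using idx unfolding bij_betw_def by auto
  have "\<forall>e\<in>E. \<exists>g. bij_betw g {1..k} e"
  proof
    fix e assume "e \<in> E"
    hence "finite e" "card e = k" using Esub finV finite_subset by blast+
    thus "\<exists>g. bij_betw g {1..k} e" using ex_bij_betw_nat_finite_1 by metis
  qed
  then obtain f where f: "\<And>e. e \<in> E \<Longrightarrow> bij_betw (f e) {1..k} e" by metis
  define m where "m = 2 * card E"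
  define u where "u e = (\<lambda>c::nat. if c = 2 * idx e + 1 then 2 else (1::nat))" for e
  define pt where "pt e i = map (\<lambda>c. if c \<in> {2 * idx e} then i else u e c) [0..<m]" for e i
  define Lf where "Lf e = pt e ` {1..k}" for e
  define P where "P = (\<Union>e\<in>E. Lf e)"
  define sel where "sel xs = (SOME e. e \<in> E \<and> xs ! (2 * idx e + 1) = 2)" for xs :: "nat list"
  define \<psi> where "\<psi> xs = f (sel xs) (xs ! (2 * idx (sel xs)))" for xs
  have lenpt: "length (pt e i) = m" for e i unfolding pt_def by simp
  have nthpt: "c < m \<Longrightarrow> pt e i ! c = (if c = 2 * idx e then i else if c = 2 * idx e + 1 then 2 else 1)" for e i c
    unfolding pt_def u_def by simp
  have ltm: "e \<in> E \<Longrightarrow> 2 * idx e + 1 < m" for e using idxlt[of e] unfolding m_def by simp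
  have key: "e \<in> E \<Longrightarrow> e' \<in> E \<Longrightarrow> pt e i ! (2 * idx e' + 1) = (if e' = e then 2 else 1)" for e e' i
  proof -
    assume a: "e \<in> E" "e' \<in> E"
    show ?thesis
    proof (cases "e' = e")
      case True then show ?thesis using nthpt ltm a by simp
    next
      case False
      hence "idx e' \<noteq> idx e" using idxinj a by blast
      then show ?thesis using nthpt[OF ltm[OF a(2)]] False by auto
    qed
  qed
  have own: "e \<in> E \<Longrightarrow> pt e i ! (2 * idx e) = i" for e i
  proof -
    assume a: "e \<in> E"
    have "2 * idx e < m" using ltm[OF a] by simp
    thus ?thesis using nthpt by simp
  qed
  have selpt: "e \<in> E \<Longrightarrow> sel (pt e i) = e" for e i
    unfolding sel_def using key by (intro some_equality) (auto split: if_splits)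
  have psipt: "e \<in> E \<Longrightarrow> \<psi> (pt e i) = f e i" for e i
    unfolding \<psi>_def using selpt own by simp
  have injpt: "e \<in> E \<Longrightarrow> inj_on (pt e) {1..k}" for e
    by (metis inj_onI own)
  have cardL: "e \<in> E \<Longrightarrow> card (Lf e) = k" for e
    unfolding Lf_def using card_image[OF injpt] by simp
  have psiL: "e \<in> E \<Longrightarrow> \<psi> ` Lf e = e" for e
  proof -
    assume a: "e \<in> E"
    have "\<psi> ` Lf e = f e ` {1..k}" unfolding Lf_def image_image using psipt[OF a] by simp
    thus ?thesis using f[OF a] unfolding bij_betw_def by simp
  qed
  have comb: "e \<in> E \<Longrightarrow> comb_line k m (Lf e)" for e
    unfolding comb_line_def Lf_def pt_def
    apply (rule exI[of _ "{2 * idx e}"], rule exI[of _ "u e"])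
    using ltm[of e] assms(1) by (auto simp: u_def)
  have disj: "e \<in> E \<Longrightarrow> e' \<in> E \<Longrightarrow> e \<noteq> e' \<Longrightarrow> Lf e \<inter> Lf e' = {}" for e e'
  proof -
    assume a: "e \<in> E" "e' \<in> E" "e \<noteq> e'"
    { fix x assume "x \<in> Lf e" "x \<in> Lf e'"
      then obtain i j where "x = pt e i" "x = pt e' j" unfolding Lf_def by blast
      hence False using key[OF a(1) a(1), of i] key[OF a(2) a(1), of j] a(3) by auto }
    thus ?thesis by blast
  qed
  have cube: "P \<subseteq> hj_cube k m"
  proof
    fix x assume "x \<in> P"
    then obtain e i where x: "x = pt e i" "i \<in> {1..k}" unfolding P_def Lf_def by auto
    have "set x \<subseteq> {1..k}"
    proof
      fix v assume "v \<in> set x"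
      then obtain c where "c < m" "v = x ! c" using x lenpt by (metis in_set_conv_nth)
      thus "v \<in> {1..k}" using nthpt x assms(1) by auto
    qed
    thus "x \<in> hj_cube k m" unfolding hj_cube_def using x lenpt by simp
  qed
  have ql: "L = Lf e" if L: "L \<subseteq> P" "quasiline k m L" and x: "x \<in> L" "x \<in> Lf e" "e \<in> E" for L x e
  proof -
    have cL: "card L = k" using L unfolding quasiline_def by simp
    have sub: "L \<subseteq> Lf e"
    proof
      fix y assume y: "y \<in> L"
      then obtain e' where e': "e' \<in> E" "y \<in> Lf e'" using L unfolding P_def by auto
      show "y \<in> Lf e"
      proof (rule ccontr)
        assume "y \<notin> Lf e"
        hence ne: "e' \<noteq> e" using e' by auto
        let ?c = "2 * idx e + 1"
        have xc: "x ! ?c = 2" using x key unfolding Lf_def by auto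
        have yc: "y ! ?c = 1"
        proof -
          obtain j where "y = pt e' j" using e' unfolding Lf_def by blast
          thus ?thesis using key[OF e'(1) x(3), of j] ne by simp
        qed
        have "inj_on (\<lambda>z. z ! ?c) L" using L(2) ltm[OF x(3)] xc yc x y
          unfolding quasiline_def by (metis numeral_One numeral_eq_iff semiring_norm(85))
        moreover have "(\<lambda>z. z ! ?c) ` L \<subseteq> {1, 2}"
        proof
          fix v assume "v \<in> (\<lambda>z. z ! ?c) ` L"
          then obtain z where "z \<in> L" "v = z ! ?c" by auto
          then obtain e'' i where "e'' \<in> E" "z = pt e'' i" using L unfolding P_def Lf_def by auto
          thus "v \<in> {1,2}" using key[OF _ x(3)] \<open>v = z ! ?c\<close> by auto
        qed
        ultimately have "card L \<le> card {1::nat, 2}"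
          by (metis card_inj_on_le finite.emptyI finite.insertI)
        thus False using cL assms(1) by simp
      qed
    qed
    have "finite (Lf e)" unfolding Lf_def by simp
    thus ?thesis using card_subset_eq sub cL cardL[OF x(3)] by metis
  qed
  have pic: "picture k V E m P \<psi>"
    unfolding picture_def
  proof (intro conjI allI impI)
    show "P \<subseteq> hj_cube k m" by (rule cube)
    show "\<psi> ` P \<subseteq> V" unfolding P_def using psiL Esub by fastforce
  next
    fix L assume a: "L \<subseteq> P \<and> quasiline k m L"
    have "card L = k" using a unfolding quasiline_def by simp
    hence "L \<noteq> {}" using assms(1) by auto
    then obtain x where "x \<in> L" by auto
    then obtain e where e: "e \<in> E" "x \<in> Lf e" using a unfolding P_def by auto
    hence "L = Lf e" using ql a \<open>x \<in> L\<close> by blast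
    thus "comb_line k m L" "\<psi> ` L \<in> E" using comb psiL e by auto
  qed
  show ?thesis
    apply (rule exI[of _ m], rule exI[of _ P], rule exI[of _ \<psi>], rule exI[of _ Lf])
    using pic comb disj psiL P_def by blast
qed

end
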